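(* Let $r\geq2$ and let $G$ be a weighted $r$-graph of order $n$ with degrees $d_1,\ldots,d_n$. Then \[ \rho(G)^r\leq\big((r-1)!\big)^r\max_{\{i_1,\ldots,i_r\}\in E(G)}d_{i_1}\cdots d_{i_r}. \]
   Context: A weighted $r$-graph $G$ on vertex set $[n]$ is a function $G:[n]^{(r)}\to[0,\infty)$ on $r$-element subsets; its edge set is $E(G)=\{e: G(e)>0\}$. The degree of vertex $v$ is $d_v=\sum\{G(e):e\in E(G),\ v\in e\}$. The adjacency matrix $A(G)$ is the cubical $r$-matrix of order $n$ with $a_{i_1,\ldots,i_r}=G(\{i_1,\ldots,i_r\})$ if $\{i_1,\ldots,i_r\}\in E(G)$ (in particular the $i_j$ are distinct) and $0$ otherwise. $\rho(G)$ is the spectral radius of $A(G)$: the largest modulus of a complex $\lambda$ for which there is a nonzero $\mathbf{x}\in\mathbb{C}^n$ with $\lambda x_k^{r-1}=\sum_{i_2,\ldots,i_r}a_{k,i_2,\ldots,i_r}x_{i_2}\cdots x_{i_r}$ for all $k$; equivalently, $\rho(G)=\max\{|\sum a_{i_1,\ldots,i_r}x_{i_1}\cdots x_{i_r}|:\mathbf{x}\in\mathbb{R}^n,\ |\mathbf{x}|_r=1\}$. *)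

theory Defs
  imports Complex_Main "HOL-Library.FuncSet"
begin

text \<open>Vertex set [n] is rendered as {..<n}. A weighted r-graph is a function
  G on sets of vertices; only its values on r-subsets of {..<n} matter.\<close>

definition weighted_rgraph :: "nat \<Rightarrow> nat \<Rightarrow> (nat set \<Rightarrow> real) \<Rightarrow> bool" where
  "weighted_rgraph n r G \<longleftrightarrow> (\<forall>e. e \<subseteq> {..<n} \<and> card e = r \<longrightarrow> G e \<ge> 0)"

definition edges :: "nat \<Rightarrow> nat \<Rightarrow> (nat set \<Rightarrow> real) \<Rightarrow> nat set set" where
  "edges n r G = {e. e \<subseteq> {..<n} \<and> card e = r \<and> G e > 0}"

definition degree :: "nat \<Rightarrow> nat \<Rightarrow> (nat set \<Rightarrow> real) \<Rightarrow> nat \<Rightarrow> real" where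
  "degree n r G v = (\<Sum>e\<in>{e\<in>edges n r G. v \<in> e}. G e)"

text \<open>Entry a_{i_1,...,i_r} of the adjacency r-matrix, the index tuple given as
  a function i on {..<r}.\<close>
definition adj_entry :: "nat \<Rightarrow> nat \<Rightarrow> (nat set \<Rightarrow> real) \<Rightarrow> (nat \<Rightarrow> nat) \<Rightarrow> real" where
  "adj_entry n r G i =
     (if inj_on i {..<r} \<and> i ` {..<r} \<in> edges n r G then G (i ` {..<r}) else 0)"

definition adj_form :: "nat \<Rightarrow> nat \<Rightarrow> (nat set \<Rightarrow> real) \<Rightarrow> (nat \<Rightarrow> real) \<Rightarrow> real" where
  "adj_form n r G x =
     (\<Sum>i\<in>({..<r} \<rightarrow>\<^sub>E {..<n}). adj_entry n r G i * (\<Prod>j<r. x (i j)))"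

text \<open>Spectral radius via the variational characterization:
  max of |form| over real x with |x|_r = 1.\<close>
definition spec_radius :: "nat \<Rightarrow> nat \<Rightarrow> (nat set \<Rightarrow> real) \<Rightarrow> real" where
  "spec_radius n r G =
     Sup {\<bar>adj_form n r G x\<bar> | x. (\<Sum>k<n. \<bar>x k\<bar> ^ r) = 1}"

end

theory Submission
  imports Defs "HOL-Analysis.Convex"
begin

lemma prod_minus_fact: "prod (\<lambda>k. r - k) {0..<r} = fact r"
proof (induction r)
  case 0 then show ?case by simp
next
  case (Suc r)
  have "prod (\<lambda>k. Suc r - k) {0..<Suc r} = Suc r * prod (\<lambda>k. Suc r - Suc k) {0..<r}"
    by (subst prod.atLeast0_lessThan_Suc_shift) simp
  also have "\<dots> = Suc r * fact r" using Suc by simp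
  finally show ?case by (simp add: fact_Suc)
qed

lemma card_inj_bij:
  assumes "finite e" "card e = r"
  shows "card {f \<in> {..<r} \<rightarrow>\<^sub>E e. inj_on f {..<r}} = fact r"
proof -
  have "card {f \<in> {..<r} \<rightarrow>\<^sub>E e. inj_on f {..<r}} =
    card e^(card {..<r} - card {..<r}) * prod ((-) (card e)) {0 ..< card {..<r}}"
    by (rule card_inj_on_subset_funcset) (use assms in auto)
  also have "\<dots> = fact r" using assms prod_minus_fact[of r] by simp
  finally show ?thesis .
qed

lemma form_eq:
  fixes n r :: nat and G :: "nat set \<Rightarrow> real"
  shows "adj_form n r G x = fact r * (\<Sum>e\<in>edges n r G. G e * (\<Prod>v\<in>e. x v))"
proof -
  define P where "P = {..<r} \<rightarrow>\<^sub>E {..<n}"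
  define E where "E = edges n r G"
  define P' where "P' = {i\<in>P. inj_on i {..<r} \<and> i ` {..<r} \<in> E}"
  define h where "h = (\<lambda>i. adj_entry n r G i * (\<Prod>j<r. x (i j)))"
  have finP: "finite P" unfolding P_def by (simp add: finite_PiE)
  have finE: "finite E" unfolding E_def edges_def
    by (rule finite_subset[of _ "Pow {..<n}"]) auto
  have "adj_form n r G x = sum h P" unfolding adj_form_def h_def P_def by simp
  also have "\<dots> = sum h P'"
    by (rule sum.mono_neutral_right) (auto simp: finP P'_def h_def adj_entry_def E_def)
  also have "\<dots> = (\<Sum>e\<in>E. sum h {i\<in>P'. i ` {..<r} = e})"
    by (rule sum.group[symmetric]) (auto simp: P'_def finP finE)
  also have "\<dots> = (\<Sum>e\<in>E. fact r * (G e * (\<Prod>v\<in>e. x v)))"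
  proof (rule sum.cong[OF refl])
    fix e assume eE: "e \<in> E"
    then have esub: "e \<subseteq> {..<n}" and ecard: "card e = r" and fine: "finite e"
      unfolding E_def edges_def using finite_subset by auto
    define B where "B = {f \<in> {..<r} \<rightarrow>\<^sub>E e. inj_on f {..<r}}"
    have "{i\<in>P'. i ` {..<r} = e} = B"
    proof (intro set_eqI iffI)
      fix i assume "i \<in> {i\<in>P'. i ` {..<r} = e}"
      then show "i \<in> B" unfolding B_def P'_def P_def by (auto simp: PiE_def)
    next
      fix i assume iB: "i \<in> B"
      then have sub: "i ` {..<r} \<subseteq> e" and inj: "inj_on i {..<r}"
        unfolding B_def by auto
      have "card (i ` {..<r}) = r" using inj by (simp add: card_image)
      then have "i ` {..<r} = e" using sub ecard fine by (metis card_subset_eq)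
      then show "i \<in> {i\<in>P'. i ` {..<r} = e}"
        using iB esub eE unfolding B_def P'_def P_def by (auto simp: PiE_def)
    qed
    moreover have "sum h B = (\<Sum>i\<in>B. G e * (\<Prod>v\<in>e. x v))"
    proof (rule sum.cong[OF refl])
      fix i assume iB: "i \<in> B"
      then have sub: "i ` {..<r} \<subseteq> e" and inj: "inj_on i {..<r}"
        unfolding B_def by auto
      have "card (i ` {..<r}) = r" using inj by (simp add: card_image)
      then have im: "i ` {..<r} = e" using sub ecard fine by (metis card_subset_eq)
      have "(\<Prod>v\<in>e. x v) = (\<Prod>j<r. x (i j))"
        unfolding im[symmetric] by (rule prod.reindex[OF inj, unfolded comp_def])
      moreover have "adj_entry n r G i = G e"
        unfolding adj_entry_def using inj im eE E_def by simp
      ultimately show "h i = G e * (\<Prod>v\<in>e. x v)" unfolding h_def by simp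
    qed
    moreover have "card B = fact r" unfolding B_def by (rule card_inj_bij[OF fine ecard])
    ultimately show "sum h {i\<in>P'. i ` {..<r} = e} = fact r * (G e * (\<Prod>v\<in>e. x v))"
      by simp
  qed
  finally show ?thesis unfolding E_def by (simp add: sum_distrib_left)
qed

lemma finite_edges: "finite (edges n r G)"
  unfolding edges_def by (rule finite_subset[of _ "Pow {..<n}"]) auto

lemma degree_pos:
  assumes "e \<in> edges n r G" "v \<in> e"
  shows "degree n r G v \<ge> G e" "G e > 0"
proof -
  show "G e > 0" using assms unfolding edges_def by auto
  have "G e \<le> (\<Sum>e\<in>{e\<in>edges n r G. v \<in> e}. G e)"
    by (rule member_le_sum) (use assms finite_edges in \<open>auto simp: edges_def\<close>)
  then show "degree n r G v \<ge> G e" unfolding degree_def .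
qed

lemma degree_nonneg: "degree n r G v \<ge> 0"
  unfolding degree_def by (rule sum_nonneg) (auto simp: edges_def)

lemma root_pow: "(a::real) \<ge> 0 \<Longrightarrow> r > 0 \<Longrightarrow> (a ^ r) powr (1 / real r) = a"
proof (cases "a = 0")
  case False
  assume "a \<ge> 0" "r > 0"
  then have "a > 0" using False by simp
  then have "(a ^ r) powr (1 / real r) = (a powr real r) powr (1 / real r)"
    by (simp add: powr_realpow)
  also have "\<dots> = a" using \<open>r > 0\<close> \<open>a > 0\<close> by (simp add: powr_powr)
  finally show ?thesis .
qed simp

lemma edge_bound:
  fixes x :: "nat \<Rightarrow> real"
  assumes r: "r \<ge> 1" and eE: "e \<in> edges n r G"
  defines "M \<equiv> Max (insert 0 ((\<lambda>e. \<Prod>v\<in>e. degree n r G v) ` edges n r G))"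
  shows "(\<Prod>v\<in>e. \<bar>x v\<bar>) \<le> (\<Sum>v\<in>e. \<bar>x v\<bar> ^ r / degree n r G v / r) * M powr (1 / real r)"
proof -
  let ?d = "degree n r G"
  define y where "y = (\<lambda>v. \<bar>x v\<bar> ^ r / ?d v)"
  have fine: "finite e" and ce: "card e = r" and esub: "e \<subseteq> {..<n}"
    using eE r unfolding edges_def by (auto intro: card_ge_0_finite)
  have ne: "e \<noteq> {}" using ce r by auto
  have dpos: "?d v > 0" if "v \<in> e" for v
    using degree_pos[OF eE that] by linarith
  have y0: "y v \<ge> 0" for v unfolding y_def by (simp add: degree_nonneg)
  have "(\<Prod>v\<in>e. \<bar>x v\<bar>) = ((\<Prod>v\<in>e. \<bar>x v\<bar>) ^ r) powr (1 / real r)"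
    using r by (simp add: root_pow prod_nonneg)
  also have "(\<Prod>v\<in>e. \<bar>x v\<bar>) ^ r = (\<Prod>v\<in>e. y v * ?d v)"
    unfolding prod_power_distrib
    by (rule prod.cong) (auto simp: y_def dest: dpos)
  also have "\<dots> = (\<Prod>v\<in>e. y v) * (\<Prod>v\<in>e. ?d v)" by (simp add: prod.distrib)
  also have "(\<dots>) powr (1 / real r) = (\<Prod>v\<in>e. y v) powr (1 / real r) * (\<Prod>v\<in>e. ?d v) powr (1 / real r)"
    using y0 dpos by (intro powr_mult prod_nonneg; force intro: less_imp_le)
  also have "\<dots> \<le> (\<Sum>v\<in>e. y v / r) * M powr (1 / real r)"
  proof (rule mult_mono)
    show "(\<Prod>v\<in>e. y v) powr (1 / real r) \<le> (\<Sum>v\<in>e. y v / real r)"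
      using arith_geom_mean[OF fine ne, of y] y0 ce by simp
    have "(\<Prod>v\<in>e. ?d v) \<le> M" unfolding M_def
      by (rule Max_ge) (use eE finite_edges in auto)
    then show "(\<Prod>v\<in>e. ?d v) powr (1 / real r) \<le> M powr (1 / real r)"
      using dpos by (intro powr_mono2 prod_nonneg) (auto intro: less_imp_le)
    show "0 \<le> (\<Sum>v\<in>e. y v / real r)" using y0 by (simp add: sum_nonneg)
    show "0 \<le> (\<Prod>v\<in>e. ?d v) powr (1 / real r)" by simp
  qed
  finally show ?thesis unfolding y_def .
qed

lemma form_bound:
  fixes x :: "nat \<Rightarrow> real" and G :: "nat set \<Rightarrow> real"
  assumes r: "r \<ge> 1" and x1: "(\<Sum>k<n. \<bar>x k\<bar> ^ r) = 1"
  defines "M \<equiv> Max (insert 0 ((\<lambda>e. \<Prod>v\<in>e. degree n r G v) ` edges n r G))"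
  shows "\<bar>adj_form n r G x\<bar> \<le> fact (r - 1) * M powr (1 / real r)"
proof -
  let ?d = "degree n r G"
  let ?E = "edges n r G"
  define Mp where "Mp = M powr (1 / real r)"
  define z where "z = (\<lambda>v. \<bar>x v\<bar> ^ r / ?d v)"
  have Mp0: "Mp \<ge> 0" unfolding Mp_def by simp
  have mono: "\<And>a b. a \<le> b \<Longrightarrow> Mp / r * a \<le> Mp / r * b"
    using Mp0 by (intro mult_left_mono) auto
  have "\<bar>\<Sum>e\<in>?E. G e * (\<Prod>v\<in>e. x v)\<bar> \<le> (\<Sum>e\<in>?E. \<bar>G e * (\<Prod>v\<in>e. x v)\<bar>)"
    by (rule sum_abs)
  also have "\<dots> = (\<Sum>e\<in>?E. G e * (\<Prod>v\<in>e. \<bar>x v\<bar>))"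
    by (rule sum.cong[OF refl]) (auto simp: abs_mult abs_prod edges_def)
  also have "\<dots> \<le> (\<Sum>e\<in>?E. G e * ((\<Sum>v\<in>e. \<bar>x v\<bar> ^ r / ?d v / r) * Mp))"
  proof (rule sum_mono)
    fix e assume eE: "e \<in> ?E"
    have "G e > 0" using eE by (simp add: edges_def)
    then show "G e * (\<Prod>v\<in>e. \<bar>x v\<bar>) \<le> G e * ((\<Sum>v\<in>e. \<bar>x v\<bar> ^ r / ?d v / r) * Mp)"
      using edge_bound[OF r eE, of x] unfolding Mp_def M_def
      by (intro mult_left_mono) auto
  qed
  also have "\<dots> = Mp / r * (\<Sum>e\<in>?E. \<Sum>v\<in>{v\<in>{..<n}. v \<in> e}. G e * z v)"
    unfolding sum_distrib_left
  proof (rule sum.cong[OF refl])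
    fix e assume eE: "e \<in> ?E"
    then have "{v\<in>{..<n}. v \<in> e} = e" by (auto simp: edges_def)
    then show "G e * ((\<Sum>v\<in>e. \<bar>x v\<bar> ^ r / ?d v / r) * Mp) =
       (\<Sum>v\<in>{v\<in>{..<n}. v \<in> e}. Mp / real r * (G e * z v))"
      by (simp add: sum_distrib_left sum_distrib_right z_def algebra_simps)
  qed
  also have "(\<Sum>e\<in>?E. \<Sum>v\<in>{v\<in>{..<n}. v \<in> e}. G e * z v) =
      (\<Sum>v\<in>{..<n}. \<Sum>e\<in>{e\<in>?E. v \<in> e}. G e * z v)"
    by (rule sum.swap_restrict) (auto simp: finite_edges)
  also have "\<dots> = (\<Sum>v\<in>{..<n}. ?d v * z v)"
    by (simp add: degree_def sum_distrib_right)
  also have "\<dots> \<le> (\<Sum>v\<in>{..<n}. \<bar>x v\<bar> ^ r)"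
  proof (rule sum_mono)
    fix v
    show "?d v * z v \<le> \<bar>x v\<bar> ^ r"
      by (cases "?d v = 0") (auto simp: z_def)
  qed
  finally have S: "\<bar>\<Sum>e\<in>?E. G e * (\<Prod>v\<in>e. x v)\<bar> \<le> Mp / r * 1"
    using x1 mono by metis
  have "\<bar>adj_form n r G x\<bar> = fact r * \<bar>\<Sum>e\<in>?E. G e * (\<Prod>v\<in>e. x v)\<bar>"
    by (simp add: form_eq abs_mult)
  also have "\<dots> \<le> fact r * (Mp / r)" using S by (intro mult_left_mono) auto
  also have "\<dots> = fact (r - 1) * Mp"
    using r by (simp add: fact_reduce[of r])
  finally show ?thesis unfolding Mp_def .
qed

lemma powr_root_pow: "(M::real) \<ge> 0 \<Longrightarrow> r > 0 \<Longrightarrow> (M powr (1 / real r)) ^ r = M"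
proof (cases "M = 0")
  case False
  assume "M \<ge> 0" "r > 0"
  then have Mp: "M > 0" using False by simp
  then have "(M powr (1 / real r)) ^ r = (M powr (1 / real r)) powr real r"
    by (simp add: powr_realpow)
  also have "\<dots> = M" using \<open>r > 0\<close> Mp by (simp add: powr_powr)
  finally show ?thesis .
qed simp

theorem theorem28:
  fixes n r :: nat and G :: "nat set \<Rightarrow> real"
  assumes "r \<ge> 2" and "n \<ge> 1" and "weighted_rgraph n r G"
  shows "spec_radius n r G ^ r \<le>
    (fact (r - 1)) ^ r * Max (insert 0 ((\<lambda>e. \<Prod>v\<in>e. degree n r G v) ` edges n r G))"
proof -
  define M where "M = Max (insert 0 ((\<lambda>e. \<Prod>v\<in>e. degree n r G v) ` edges n r G))"
  define C where "C = fact (r - 1) * M powr (1 / real r)"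
  define S where "S = {\<bar>adj_form n r G x\<bar> | x. (\<Sum>k<n. \<bar>x k\<bar> ^ r) = 1}"
  have r1: "r \<ge> 1" using assms by simp
  have M0: "M \<ge> 0" unfolding M_def by (rule Max_ge) (auto simp: finite_edges)
  have bound: "s \<le> C" if "s \<in> S" for s
    using that form_bound[OF r1] unfolding S_def C_def M_def by auto
  define x0 where "x0 = (\<lambda>k::nat. if k = 0 then 1 else (0::real))"
  have "(\<Sum>k<n. \<bar>x0 k\<bar> ^ r) = (\<Sum>k<n. if k = 0 then 1 else 0)"
    by (rule sum.cong) (use r1 in \<open>auto simp: x0_def\<close>)
  also have "\<dots> = 1" using assms by simp
  finally have "\<bar>adj_form n r G x0\<bar> \<in> S" unfolding S_def by blast
  then have ne: "S \<noteq> {}" by blast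
  have bdd: "bdd_above S" unfolding bdd_above_def using bound by blast
  have sup0: "Sup S \<ge> 0"
  proof -
    have "\<bar>adj_form n r G x0\<bar> \<le> Sup S" by (rule cSup_upper[OF \<open>_ \<in> S\<close> bdd])
    then show ?thesis by linarith
  qed
  have "Sup S \<le> C" by (rule cSup_least[OF ne bound])
  then have "Sup S ^ r \<le> C ^ r" using sup0 by (intro power_mono)
  also have "C ^ r = fact (r - 1) ^ r * M"
    unfolding C_def power_mult_distrib using powr_root_pow[OF M0] r1 by simp
  finally show ?thesis unfolding spec_radius_def S_def M_def .
qed

end
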